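(* Let $k>500$ and $\ln^3k/\sqrt k<\delta<1/100$, let $d=300\lceil\ln k\rceil$ and $\varepsilon=50\delta/\lceil\ln k\rceil$, and let $c^1,\dots,c^k$ be sampled independently and uniformly from the grid $G=\{0,\varepsilon,2\varepsilon,\dots\}^d\cap[0,1]^d$. Then with probability at least $1-1/k^2$, $\|c^i-c^j\|_2\ge\sqrt d/5$ for all $i\ne j$.
   Context: $G$ is the set of points of $[0,1]^d$ all of whose coordinates are nonnegative integer multiples of $\varepsilon$. *)

theory Defs
  imports "HOL-Probability.Probability"
begin

text \<open>Points of [0,1]^d are represented as functions nat => real, with coordinates
  indexed by 0..<d; coordinates outside 0..<d are fixed to 0.\<close>

definition grid :: "nat \<Rightarrow> real \<Rightarrow> (nat \<Rightarrow> real) set" where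
  "grid d \<epsilon> = {x. (\<forall>i<d. (\<exists>n::nat. x i = real n * \<epsilon>) \<and> 0 \<le> x i \<and> x i \<le> 1)
                    \<and> (\<forall>i\<ge>d. x i = 0)}"

definition dist2 :: "nat \<Rightarrow> (nat \<Rightarrow> real) \<Rightarrow> (nat \<Rightarrow> real) \<Rightarrow> real" where
  "dist2 d x y = sqrt (\<Sum>i<d. (x i - y i)^2)"

definition grid_samples :: "nat \<Rightarrow> nat \<Rightarrow> real \<Rightarrow> (nat \<Rightarrow> nat \<Rightarrow> real) pmf" where
  "grid_samples k d \<epsilon> = Pi_pmf {..<k} (\<lambda>_. 0) (\<lambda>_. pmf_of_set (grid d \<epsilon>))"

end

theory Submission
  imports Defs
begin


lemma Pi_pmf_pair_proj:
  assumes "finite I" "i \<in> I" "j \<in> I" "i \<noteq> j"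
  shows "map_pmf (\<lambda>c. (c i, c j)) (Pi_pmf I dflt P) = pair_pmf (P i) (P j)"
proof -
  have I: "insert i (I - {i}) = I" using assms by auto
  have "Pi_pmf (insert i (I - {i})) dflt P = map_pmf (\<lambda>(y,f). f(i:=y)) (pair_pmf (P i) (Pi_pmf (I-{i}) dflt P))"
    by (rule Pi_pmf_insert) (use assms in auto)
  hence "Pi_pmf I dflt P = map_pmf (\<lambda>(y,f). f(i:=y)) (pair_pmf (P i) (Pi_pmf (I-{i}) dflt P))"
    by (simp only: I)
  hence "map_pmf (\<lambda>c. (c i, c j)) (Pi_pmf I dflt P) = map_pmf (\<lambda>(y,f). (id y, f j)) (pair_pmf (P i) (Pi_pmf (I-{i}) dflt P))"
    using assms(4) by (simp add: pmf.map_comp o_def case_prod_unfold)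
  also have "\<dots> = pair_pmf (map_pmf id (P i)) (map_pmf (\<lambda>f. f j) (Pi_pmf (I-{i}) dflt P))"
    by (rule map_pair)
  also have "map_pmf (\<lambda>f. f j) (Pi_pmf (I-{i}) dflt P) = P j"
    using assms by (subst Pi_pmf_component) auto
  finally show ?thesis by simp
qed

lemma expectation_pair_finite:
  fixes h :: "'a \<times> 'b \<Rightarrow> real"
  assumes fp: "finite (set_pmf p)" and fq: "finite (set_pmf q)"
  shows "measure_pmf.expectation (pair_pmf p q) h =
         measure_pmf.expectation p (\<lambda>a. measure_pmf.expectation q (\<lambda>b. h (a,b)))"
proof -
  have "measure_pmf.expectation (pair_pmf p q) h = (\<Sum>z\<in>set_pmf p \<times> set_pmf q. h z * pmf (pair_pmf p q) z)"
    by (rule integral_measure_pmf_real) (auto simp: fp fq)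
  also have "\<dots> = (\<Sum>a\<in>set_pmf p. \<Sum>b\<in>set_pmf q. h (a,b) * (pmf p a * pmf q b))"
    by (subst sum.cartesian_product) (auto intro!: sum.cong simp: pmf_pair)
  also have "\<dots> = (\<Sum>a\<in>set_pmf p. (\<Sum>b\<in>set_pmf q. h (a,b) * pmf q b) * pmf p a)"
    by (simp add: sum_distrib_left sum_distrib_right mult_ac)
  also have "\<dots> = (\<Sum>a\<in>set_pmf p. measure_pmf.expectation q (\<lambda>b. h (a,b)) * pmf p a)"
    by (intro sum.cong refl arg_cong2[where f="(*)"] integral_measure_pmf_real[symmetric]) (auto simp: fq)
  also have "\<dots> = measure_pmf.expectation p (\<lambda>a. measure_pmf.expectation q (\<lambda>b. h (a,b)))"
    by (rule integral_measure_pmf_real[symmetric]) (auto simp: fp)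
  finally show ?thesis .
qed

lemma mgf_pair_Pi:
  fixes f :: "real \<Rightarrow> real \<Rightarrow> real"
  assumes D: "finite D" and fU: "finite (set_pmf U)" and nn: "\<And>u v. f u v \<ge> 0"
  shows "measure_pmf.expectation (pair_pmf (Pi_pmf D 0 (\<lambda>_. U)) (Pi_pmf D 0 (\<lambda>_. U)))
            (\<lambda>z. \<Prod>b\<in>D. f (fst z b) (snd z b))
         = (measure_pmf.expectation U (\<lambda>u. measure_pmf.expectation U (\<lambda>v. f u v))) ^ card D"
proof -
  have fin: "finite (set_pmf (Pi_pmf D 0 (\<lambda>_. U)))"
    using D fU by (auto simp: set_Pi_pmf)
  have "measure_pmf.expectation (pair_pmf (Pi_pmf D 0 (\<lambda>_. U)) (Pi_pmf D 0 (\<lambda>_. U)))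
            (\<lambda>z. \<Prod>b\<in>D. f (fst z b) (snd z b))
     = measure_pmf.expectation (Pi_pmf D 0 (\<lambda>_. U)) (\<lambda>x. measure_pmf.expectation (Pi_pmf D 0 (\<lambda>_. U)) (\<lambda>y. \<Prod>b\<in>D. f (x b) (y b)))"
    by (subst expectation_pair_finite) (auto simp: fin)
  also have "\<dots> = measure_pmf.expectation (Pi_pmf D 0 (\<lambda>_. U)) (\<lambda>x. \<Prod>b\<in>D. measure_pmf.expectation U (\<lambda>v. f (x b) v))"
  proof (intro Bochner_Integration.integral_cong refl)
    fix x
    show "measure_pmf.expectation (Pi_pmf D 0 (\<lambda>_. U)) (\<lambda>y. \<Prod>b\<in>D. f (x b) (y b)) = (\<Prod>b\<in>D. measure_pmf.expectation U (\<lambda>v. f (x b) v))"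
      using expectation_prod_Pi_pmf[where A=D and p="\<lambda>_. U" and f="\<lambda>b v. f (x b) v" and dflt=0]
      by (simp add: D fU integrable_measure_pmf_finite nn)
  qed
  also have "\<dots> = (\<Prod>b\<in>D. measure_pmf.expectation U (\<lambda>u. measure_pmf.expectation U (\<lambda>v. f u v)))"
    using expectation_prod_Pi_pmf[where A=D and p="\<lambda>_. U" and f="\<lambda>b u. measure_pmf.expectation U (\<lambda>v. f u v)" and dflt=0]
    by (simp add: D fU integrable_measure_pmf_finite nn Bochner_Integration.integral_nonneg)
  also have "\<dots> = (measure_pmf.expectation U (\<lambda>u. measure_pmf.expectation U (\<lambda>v. f u v))) ^ card D" by simp
  finally show ?thesis .
qed

lemma tri_sum: "(N - T)^2 \<le> 2 * (\<Sum>a<N. (Suc a - T))"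
proof (induction N)
  case 0 then show ?case by simp
next
  case (Suc N)
  show ?case
  proof (cases "T \<le> N")
    case True
    have "(Suc N - T)^2 = (N - T)^2 + 2 * (Suc N - T) - 1"
      using True by (simp add: power2_eq_square Suc_diff_le algebra_simps)
    then show ?thesis using Suc by simp
  next
    case False
    then have "Suc N - T = 0" by simp
    then show ?thesis by simp
  qed
qed

lemma coord_set:
  fixes \<epsilon> :: real
  assumes "\<epsilon> > 0"
  shows "{r. (\<exists>n::nat. r = real n * \<epsilon>) \<and> 0 \<le> r \<and> r \<le> 1} = (\<lambda>n. real n * \<epsilon>) ` {..<nat \<lfloor>1/\<epsilon>\<rfloor> + 1}"
proof -
  have key: "real n * \<epsilon> \<le> 1 \<longleftrightarrow> n < nat \<lfloor>1/\<epsilon>\<rfloor> + 1" for n :: nat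
  proof -
    have "real n * \<epsilon> \<le> 1 \<longleftrightarrow> real n \<le> 1/\<epsilon>" using assms by (simp add: field_simps)
    also have "\<dots> \<longleftrightarrow> int n \<le> \<lfloor>1/\<epsilon>\<rfloor>" by (simp add: le_floor_iff)
    also have "\<dots> \<longleftrightarrow> n < nat \<lfloor>1/\<epsilon>\<rfloor> + 1"
      using assms by (simp add: le_nat_iff[symmetric] less_Suc_eq_le)
    finally show ?thesis .
  qed
  show ?thesis
  proof (intro equalityI subsetI)
    fix x assume "x \<in> {r. (\<exists>n::nat. r = real n * \<epsilon>) \<and> 0 \<le> r \<and> r \<le> 1}"
    then obtain n :: nat where n: "x = real n * \<epsilon>" "x \<le> 1" by blast
    hence "n < nat \<lfloor>1/\<epsilon>\<rfloor> + 1" using key by blast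
    thus "x \<in> (\<lambda>n. real n * \<epsilon>) ` {..<nat \<lfloor>1/\<epsilon>\<rfloor> + 1}" using n by blast
  next
    fix x assume "x \<in> (\<lambda>n. real n * \<epsilon>) ` {..<nat \<lfloor>1/\<epsilon>\<rfloor> + 1}"
    then obtain n :: nat where n: "x = real n * \<epsilon>" "n < nat \<lfloor>1/\<epsilon>\<rfloor> + 1" by blast
    have "0 \<le> x" using n assms by simp
    moreover have "x \<le> 1" using n key by blast
    ultimately show "x \<in> {r. (\<exists>n::nat. r = real n * \<epsilon>) \<and> 0 \<le> r \<and> r \<le> 1}" using n by blast
  qed
qed

lemma grid_eq:
  assumes "\<epsilon> > 0"
  shows "grid d \<epsilon> = PiE_dflt {..<d} 0 (\<lambda>_. (\<lambda>n. real n * \<epsilon>) ` {..<nat \<lfloor>1/\<epsilon>\<rfloor> + 1})"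
  unfolding grid_def PiE_dflt_def coord_set[OF assms, symmetric]
proof (intro set_eqI iffI)
  fix x assume "x \<in> {x. (\<forall>i<d. (\<exists>n::nat. x i = real n * \<epsilon>) \<and> 0 \<le> x i \<and> x i \<le> 1) \<and> (\<forall>i\<ge>d. x i = 0)}"
  thus "x \<in> {f. \<forall>xa. (xa \<in> {..<d} \<longrightarrow> f xa \<in> {r. (\<exists>n::nat. r = real n * \<epsilon>) \<and> 0 \<le> r \<and> r \<le> 1}) \<and> (xa \<notin> {..<d} \<longrightarrow> f xa = 0)}"
    by (simp add: not_less)
next
  fix x assume "x \<in> {f. \<forall>xa. (xa \<in> {..<d} \<longrightarrow> f xa \<in> {r. (\<exists>n::nat. r = real n * \<epsilon>) \<and> 0 \<le> r \<and> r \<le> 1}) \<and> (xa \<notin> {..<d} \<longrightarrow> f xa = 0)}"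
  thus "x \<in> {x. (\<forall>i<d. (\<exists>n::nat. x i = real n * \<epsilon>) \<and> 0 \<le> x i \<and> x i \<le> 1) \<and> (\<forall>i\<ge>d. x i = 0)}"
    by (simp add: not_less)
qed

lemma coord_mgf:
  fixes \<epsilon> :: real
  assumes e0: "\<epsilon> > 0" and e1: "\<epsilon> \<le> 1/50"
  defines "A \<equiv> (\<lambda>n. real n * \<epsilon>) ` {..<nat \<lfloor>1/\<epsilon>\<rfloor> + 1}"
  shows "measure_pmf.expectation (pmf_of_set A) (\<lambda>u. measure_pmf.expectation (pmf_of_set A)
           (\<lambda>v. if 2/5 \<le> \<bar>u - v\<bar> then 2/3 else 1::real)) \<le> 1 - (29/50)^2/3"
proof -
  define N where "N = nat \<lfloor>1/\<epsilon>\<rfloor> + 1"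
  define T where "T = nat \<lceil>(2/5)/\<epsilon>\<rceil>"
  define f :: "real \<Rightarrow> real \<Rightarrow> real" where "f u v = (if 2/5 \<le> \<bar>u - v\<bar> then 2/3 else 1)" for u v
  have inj: "inj_on (\<lambda>n. real n * \<epsilon>) {..<N}" using e0 by (auto simp: inj_on_def)
  have AN: "A = (\<lambda>n. real n * \<epsilon>) ` {..<N}" by (simp add: A_def N_def)
  have finA: "finite A" and neA: "A \<noteq> {}" and cardA: "card A = N"
    using inj by (auto simp: AN N_def card_image)
  have Npos: "N > 0" by (simp add: N_def)
  have intA: "measure_pmf.expectation (pmf_of_set A) g = (\<Sum>a<N. g (real a * \<epsilon>)) / N" for g
    using finA neA by (simp add: integral_pmf_of_set AN sum.reindex[OF inj] card_image[OF inj])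
  have E: "measure_pmf.expectation (pmf_of_set A) (\<lambda>u. measure_pmf.expectation (pmf_of_set A) (\<lambda>v. f u v))
      = (\<Sum>a<N. \<Sum>b<N. f (real a * \<epsilon>) (real b * \<epsilon>)) / (real N)^2"
    by (simp add: intA sum_divide_distrib power2_eq_square)
  have T1: "T \<ge> 1"
  proof -
    have "0 < (2/5)/\<epsilon>" using e0 by simp
    moreover have "(2/5)/\<epsilon> \<le> of_int \<lceil>(2/5)/\<epsilon>\<rceil>" by (rule le_of_int_ceiling)
    ultimately have "0 < \<lceil>(2/5)/\<epsilon>\<rceil>" by linarith
    thus ?thesis unfolding T_def by linarith
  qed
  have Teps: "real T * \<epsilon> \<ge> 2/5"
  proof -
    have "real T \<ge> (2/5)/\<epsilon>" unfolding T_def by linarith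
    thus ?thesis using e0 by (simp add: field_simps)
  qed
  have fle: "f (real a * \<epsilon>) (real b * \<epsilon>) \<le> 1 - of_bool (b + T \<le> a) / 3 - of_bool (a + T \<le> b) / 3" for a b
  proof -
    have c1: "2/5 \<le> \<bar>real a * \<epsilon> - real b * \<epsilon>\<bar>" if "b + T \<le> a"
    proof -
      have "real T \<le> real a - real b" using that by linarith
      hence "real T * \<epsilon> \<le> (real a - real b) * \<epsilon>" using e0 by (intro mult_right_mono) auto
      thus ?thesis using Teps by (auto simp: algebra_simps)
    qed
    have c2: "2/5 \<le> \<bar>real a * \<epsilon> - real b * \<epsilon>\<bar>" if "a + T \<le> b"
    proof -
      have "real T \<le> real b - real a" using that by linarith
      hence "real T * \<epsilon> \<le> (real b - real a) * \<epsilon>" using e0 by (intro mult_right_mono) auto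
      thus ?thesis using Teps by (auto simp: algebra_simps)
    qed
    show ?thesis using c1 c2 T1 by (auto simp: f_def)
  qed
  define X where "X = (\<Sum>a<N. \<Sum>b<N. of_bool (b + T \<le> a) :: real)"
  have XY: "(\<Sum>a<N. \<Sum>b<N. of_bool (a + T \<le> b) :: real) = X"
    unfolding X_def by (rule sum.swap)
  have Xeq: "X = (\<Sum>a<N. real (Suc a - T))"
    unfolding X_def
  proof (intro sum.cong refl)
    fix a assume "a \<in> {..<N}"
    hence "{..<N} \<inter> {b. b + T \<le> a} = {..<Suc a - T}" by auto
    thus "(\<Sum>b<N. of_bool (b + T \<le> a) :: real) = real (Suc a - T)"
      by (simp add: sum_of_bool_eq)
  qed
  have Xge: "X \<ge> real ((N - T)^2) / 2"
  proof -
    have "real ((N - T)^2) \<le> real (2 * (\<Sum>a<N. (Suc a - T)))"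
      using tri_sum[of N T] by linarith
    thus ?thesis by (simp add: Xeq)
  qed
  have "(\<Sum>a<N. \<Sum>b<N. f (real a * \<epsilon>) (real b * \<epsilon>))
      \<le> (\<Sum>a<N. \<Sum>b<N. 1 - of_bool (b + T \<le> a) / 3 - of_bool (a + T \<le> b) / 3)"
    by (intro sum_mono fle)
  also have "\<dots> = real N * real N - X / 3 - X / 3"
    using XY by (simp add: sum_subtractf sum_divide_distrib[symmetric] X_def)
  finally have S: "(\<Sum>a<N. \<Sum>b<N. f (real a * \<epsilon>) (real b * \<epsilon>)) \<le> real N * real N - real ((N - T)^2) / 3"
    using Xge by linarith
  have NT: "real T \<le> real N * (2/5 + \<epsilon>)"
  proof -
    have "0 < (2/5)/\<epsilon>" using e0 by simp
    moreover have "(2/5)/\<epsilon> \<le> of_int \<lceil>(2/5)/\<epsilon>\<rceil>" by (rule le_of_int_ceiling)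
    ultimately have "0 < \<lceil>(2/5)/\<epsilon>\<rceil>" by linarith
    hence c0: "0 \<le> \<lceil>(2/5)/\<epsilon>\<rceil>" by (rule less_imp_le)
    have "real T = of_int \<lceil>(2/5)/\<epsilon>\<rceil>" unfolding T_def by (rule of_nat_nat[OF c0])
    moreover have "of_int \<lceil>(2/5)/\<epsilon>\<rceil> - 1 < (2/5)/\<epsilon>" using ceiling_correct[of "(2/5)/\<epsilon>"] by linarith
    ultimately have "real T \<le> (2/5)/\<epsilon> + 1" by linarith
    moreover have "1/\<epsilon> \<le> real N"
    proof -
      have f0: "0 \<le> \<lfloor>1/\<epsilon>\<rfloor>" using e0 by simp
      have "real N = of_int \<lfloor>1/\<epsilon>\<rfloor> + 1" unfolding N_def by (simp only: of_nat_add of_nat_1 of_nat_nat[OF f0])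
      moreover have "1/\<epsilon> < of_int \<lfloor>1/\<epsilon>\<rfloor> + 1" using floor_correct[of "1/\<epsilon>"] by linarith
      ultimately show ?thesis by linarith
    qed
    moreover have "(2/5)/\<epsilon> + 1 = (2/5 + \<epsilon>) * (1/\<epsilon>)" using e0 by (simp add: field_simps)
    ultimately have "real T \<le> (2/5 + \<epsilon>) * (1/\<epsilon>)" by linarith
    also have "\<dots> \<le> (2/5 + \<epsilon>) * real N" using \<open>1/\<epsilon> \<le> real N\<close> e0 by (intro mult_left_mono) auto
    finally show ?thesis by (simp add: mult_ac)
  qed
  have N0: "0 \<le> real N" by simp
  have TN': "real T \<le> real N"
  proof -
    have "real N * (2/5 + \<epsilon>) \<le> real N * 1" using e1 N0 by (intro mult_left_mono) auto
    thus ?thesis using NT by linarith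
  qed
  hence TN: "T \<le> N" by simp
  have ratio: "29/50 * real N \<le> real (N - T)"
  proof -
    have "real N * (29/50) \<le> real N * (3/5 - \<epsilon>)" using e1 N0 by (intro mult_left_mono) auto
    moreover have "real (N - T) = real N - real T" using TN by (rule of_nat_diff)
    ultimately show ?thesis using NT by (simp add: algebra_simps)
  qed
  have sq: "(29/50 * real N)^2 \<le> real ((N - T)^2)"
    unfolding of_nat_power using ratio N0 by (intro power_mono) auto
  have "(\<Sum>a<N. \<Sum>b<N. f (real a * \<epsilon>) (real b * \<epsilon>)) / (real N)^2 \<le>
        (real N * real N - (29/50 * real N)^2 / 3) / (real N)^2"
    using S sq Npos by (intro divide_right_mono) (linarith, simp)
  also have "\<dots> = 1 - (29/50)^2/3" using Npos by (simp add: field_simps power2_eq_square)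
  finally show ?thesis using E by (simp add: f_def)
qed

lemma pair_bad_bound:
  fixes \<epsilon> :: real and n :: nat
  assumes e0: "\<epsilon> > 0" and e1: "\<epsilon> \<le> 1/50"
  shows "measure_pmf.prob (pair_pmf (pmf_of_set (grid (300 * n) \<epsilon>)) (pmf_of_set (grid (300 * n) \<epsilon>)))
           {z. dist2 (300 * n) (fst z) (snd z) < sqrt (real (300 * n)) / 5} \<le> exp (- 4 * real n)"
proof -
  define d where "d = 300 * n"
  define A where "A = (\<lambda>n. real n * \<epsilon>) ` {..<nat \<lfloor>1/\<epsilon>\<rfloor> + 1}"
  define U where "U = pmf_of_set A"
  define Pd where "Pd = Pi_pmf {..<d} 0 (\<lambda>_. U)"
  define f :: "real \<Rightarrow> real \<Rightarrow> real" where "f u v = (if 2/5 \<le> \<bar>u - v\<bar> then 2/3 else 1)" for u v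
  define bad where "bad = {z. dist2 d (fst z) (snd z) < sqrt (real d) / 5}"
  define h where "h z = (3/2::real)^(75*n) * (\<Prod>b<d. f (fst z b) (snd z b))" for z :: "(nat \<Rightarrow> real) \<times> (nat \<Rightarrow> real)"
  have inj: "inj_on (\<lambda>n. real n * \<epsilon>) {..<nat \<lfloor>1/\<epsilon>\<rfloor> + 1}" using e0 by (auto simp: inj_on_def)
  have finA: "finite A" and neA: "A \<noteq> {}" unfolding A_def by auto
  have finU: "finite (set_pmf U)" using finA neA by (simp add: U_def)
  have G: "pmf_of_set (grid d \<epsilon>) = Pd"
    unfolding Pd_def U_def grid_eq[OF e0] A_def[symmetric]
    by (rule Pi_pmf_of_set[symmetric]) (use finA neA in auto)
  have finPd: "finite (set_pmf Pd)" unfolding Pd_def using finU by (auto simp: set_Pi_pmf)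
  have finP: "finite (set_pmf (pair_pmf Pd Pd))" using finPd by simp
  have ind_le: "indicator bad z \<le> h z" for z
  proof (cases "z \<in> bad")
    case False
    have "0 \<le> h z" unfolding h_def f_def by (intro mult_nonneg_nonneg prod_nonneg) auto
    thus ?thesis using False by simp
  next
    case True
    define x where "x = fst z"
    define y where "y = snd z"
    define B where "B = {b\<in>{..<d}. 2/5 \<le> \<bar>x b - y b\<bar>}"
    have "sqrt (\<Sum>b<d. (x b - y b)^2) < sqrt (real d / 25)"
      using True unfolding bad_def dist2_def x_def y_def by (simp add: real_sqrt_divide)
    hence S: "(\<Sum>b<d. (x b - y b)^2) < real d / 25" by (simp only: real_sqrt_less_iff)
    have "(\<Sum>b\<in>B. (2/5::real)^2) \<le> (\<Sum>b\<in>B. (x b - y b)^2)"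
    proof (intro sum_mono)
      fix b assume "b \<in> B"
      hence "2/5 \<le> \<bar>x b - y b\<bar>" by (simp add: B_def)
      hence "(2/5)^2 \<le> \<bar>x b - y b\<bar>^2" by (intro power_mono) auto
      thus "(2/5::real)^2 \<le> (x b - y b)^2" by simp
    qed
    also have "\<dots> \<le> (\<Sum>b<d. (x b - y b)^2)"
      by (intro sum_mono2) (auto simp: B_def)
    finally have "real (card B) * (4/25) < real d / 25" using S by (simp add: power2_eq_square)
    hence cB: "card B \<le> 75 * n" unfolding d_def by simp
    have "(\<Prod>b<d. f (x b) (y b)) = (\<Prod>b\<in>B. 2/3) * (\<Prod>b\<in>{..<d} \<inter> - {b. 2/5 \<le> \<bar>x b - y b\<bar>}. 1)"
      unfolding f_def B_def by (subst prod.If_cases) (auto simp: Int_def)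
    also have "\<dots> = (2/3)^card B" by simp
    also have "\<dots> \<ge> (2/3)^(75*n)" using cB by (intro power_decreasing) auto
    finally have "(3/2::real)^(75*n) * (2/3)^(75*n) \<le> h z" unfolding h_def x_def y_def
      by (intro mult_left_mono) auto
    moreover have "(3/2::real)^(75*n) * (2/3)^(75*n) = 1" by (simp add: power_mult_distrib[symmetric])
    ultimately show ?thesis using True by simp
  qed
  have "measure_pmf.prob (pair_pmf Pd Pd) bad = measure_pmf.expectation (pair_pmf Pd Pd) (indicator bad)"
    by simp
  also have "\<dots> \<le> measure_pmf.expectation (pair_pmf Pd Pd) h"
    by (intro integral_mono ind_le integrable_measure_pmf_finite finP)
  also have "\<dots> = (3/2)^(75*n) * measure_pmf.expectation (pair_pmf Pd Pd) (\<lambda>z. \<Prod>b<d. f (fst z b) (snd z b))"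
    unfolding h_def by simp
  also have "measure_pmf.expectation (pair_pmf Pd Pd) (\<lambda>z. \<Prod>b<d. f (fst z b) (snd z b))
      = (measure_pmf.expectation U (\<lambda>u. measure_pmf.expectation U (\<lambda>v. f u v))) ^ d"
    unfolding Pd_def by (subst mgf_pair_Pi) (auto simp: finU f_def)
  also have "measure_pmf.expectation U (\<lambda>u. measure_pmf.expectation U (\<lambda>v. f u v)) \<le> 1 - (29/50)^2/3"
    unfolding U_def A_def f_def by (rule coord_mgf[OF e0 e1])
  hence "(measure_pmf.expectation U (\<lambda>u. measure_pmf.expectation U (\<lambda>v. f u v))) ^ d \<le> (1 - (29/50)^2/3) ^ d"
    by (intro power_mono) (auto simp: f_def intro!: Bochner_Integration.integral_nonneg)
  hence "(3/2::real)^(75*n) * (measure_pmf.expectation U (\<lambda>u. measure_pmf.expectation U (\<lambda>v. f u v))) ^ d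
        \<le> (3/2)^(75*n) * (1 - (29/50)^2/3) ^ d" by (intro mult_left_mono) auto
  also have "(3/2::real)^(75*n) * (1 - (29/50)^2/3) ^ d = ((3/2) * (1 - (29/50)^2/3)^4) ^ (75*n)"
  proof -
    have gen: "(a::real)^m * c^(4*m) = (a * c^4)^m" for a c m
      by (simp add: power_mult power_mult_distrib)
    have "300 * n = 4 * (75 * n)" by simp
    thus ?thesis unfolding d_def using gen by metis
  qed
  also have "\<dots> \<le> (1 - 4/75) ^ (75*n)" by (intro power_mono) (auto simp: power_def)
  also have "\<dots> \<le> (exp (-4/75)) ^ (75*n)"
    by (intro power_mono) (use exp_ge_add_one_self[of "-4/75::real"] in auto)
  also have "\<dots> = exp (- 4 * real n)" by (simp flip: exp_of_nat_mult)
  finally show ?thesis unfolding bad_def G[unfolded d_def, symmetric] d_def by simp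
qed
lemma ln_gt_pow3:
  fixes x :: real
  assumes "(3::real)^c < x"
  shows "real c < ln x"
proof -
  have "exp (real c) = exp 1 ^ c" using exp_of_nat_mult[of c 1] by simp
  also have "\<dots> \<le> 3 ^ c" by (intro power_mono exp_le) auto
  finally have "exp (real c) < x" using assms by linarith
  moreover have "x > 0" using assms by (smt (verit) zero_less_power)
  ultimately have "ln (exp (real c)) < ln x" by (subst ln_less_cancel_iff) auto
  thus ?thesis by simp
qed

lemma boot:
  fixes L x :: real
  assumes "10000 * L^6 < x" "(a::real) < L" "0 \<le> a" "(3::real)^c \<le> 10000 * a^6"
  shows "real c < ln x"
proof -
  have "a^6 \<le> L^6" using assms by (intro power_mono) auto
  hence "(3::real)^c < x" using assms by linarith
  thus ?thesis by (rule ln_gt_pow3)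
qed

theorem lemma8:
  fixes k :: nat and \<delta> :: real
  assumes "k > 500"
    and "ln (real k) ^ 3 / sqrt (real k) < \<delta>" and "\<delta> < 1/100"
  defines "d \<equiv> 300 * nat \<lceil>ln (real k)\<rceil>"
    and "\<epsilon> \<equiv> 50 * \<delta> / real_of_int \<lceil>ln (real k)\<rceil>"
  shows "measure_pmf.prob (grid_samples k d \<epsilon>)
           {c. \<forall>i<k. \<forall>j<k. i \<noteq> j \<longrightarrow> dist2 d (c i) (c j) \<ge> sqrt (real d) / 5}
         \<ge> 1 - 1 / (real k)^2"
proof -
  define L where "L = ln (real k)"
  define n where "n = nat \<lceil>L\<rceil>"
  have k0: "real k > 500" using assms(1) by simp
  have "real (5::nat) < L" unfolding L_def by (rule ln_gt_pow3) (use k0 in simp)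
  hence L5: "5 < L" by simp
  have sk: "sqrt (real k) > 0" using k0 by simp
  have "L^3 / sqrt (real k) < 1/100" using assms(2,3) unfolding L_def by linarith
  hence "100 * L^3 < sqrt (real k)" using sk by (simp add: field_simps)
  moreover have "0 \<le> 100 * L^3" using L5 by simp
  ultimately have "(100 * L^3)^2 < (sqrt (real k))^2" by (intro power_strict_mono) auto
  hence kL: "10000 * L^6 < real k" by (simp add: power_mult_distrib power_mult[symmetric])
  have L17: "real (17::nat) < ln (real k)" by (rule boot[OF kL L5]) auto
  have L23: "real (23::nat) < ln (real k)" by (rule boot[OF kL L17[folded L_def]]) auto
  have L25: "real (25::nat) < ln (real k)" by (rule boot[OF kL L23[folded L_def]]) auto
  hence L25': "25 < L" by (simp add: L_def)
  have nL: "real n \<ge> L" and nint: "real_of_int \<lceil>L\<rceil> = real n" unfolding n_def using L25' by linarith+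
  have n26: "real n \<ge> 25" using nL L25' by linarith
  have dpos: "\<delta> > 0"
  proof -
    have "0 < L^3 / sqrt (real k)" using L25' sk by simp
    thus ?thesis using assms(2) unfolding L_def by linarith
  qed
  have epsdef: "\<epsilon> = 50 * \<delta> / real n" unfolding \<epsilon>_def L_def[symmetric] nint ..
  have e0: "\<epsilon> > 0" unfolding epsdef using dpos n26 by simp
  have e1: "\<epsilon> \<le> 1/50"
  proof -
    have "50 * \<delta> \<le> 1/2" using assms(3) by simp
    also have "1/2 \<le> real n / 50" using n26 by simp
    finally show ?thesis unfolding epsdef using n26 by (simp add: field_simps)
  qed
  have dn: "d = 300 * n" unfolding d_def n_def L_def ..
  define M where "M = grid_samples k d \<epsilon>"
  define good where "good = {c. \<forall>i<k. \<forall>j<k. i \<noteq> j \<longrightarrow> dist2 d (c i) (c j) \<ge> sqrt (real d) / 5}"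
  define P where "P = {..<k} \<times> {..<k} \<inter> {p. fst p \<noteq> snd p}"
  define Bd where "Bd p = {c. dist2 d (c (fst p)) (c (snd p)) < sqrt (real d) / 5}" for p :: "nat \<times> nat"
  have finP: "finite P" unfolding P_def by simp
  have cardP: "card P \<le> k * k"
  proof -
    have "card P \<le> card ({..<k} \<times> {..<k})" unfolding P_def by (intro card_mono) auto
    thus ?thesis by (simp add: card_cartesian_product)
  qed
  have sub: "UNIV - good \<subseteq> (\<Union>p\<in>P. Bd p)"
  proof
    fix c assume "c \<in> UNIV - good"
    then obtain i j where ij: "i < k" "j < k" "i \<noteq> j" "\<not> (dist2 d (c i) (c j) \<ge> sqrt (real d) / 5)"
      unfolding good_def by blast
    hence "(i, j) \<in> P" unfolding P_def by simp
    moreover have "c \<in> Bd (i, j)" unfolding Bd_def using ij(4) by (simp add: not_le)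
    ultimately show "c \<in> (\<Union>p\<in>P. Bd p)" by blast
  qed
  have Bd_le: "measure_pmf.prob M (Bd p) \<le> exp (- 4 * real n)" if pP: "p \<in> P" for p
  proof -
    obtain i j where p: "p = (i, j)" "i < k" "j < k" "i \<noteq> j" using pP unfolding P_def by (cases p) auto
    have "M = Pi_pmf {..<k} (\<lambda>_. 0) (\<lambda>_. pmf_of_set (grid d \<epsilon>))" unfolding M_def grid_samples_def by (rule refl)
    hence "map_pmf (\<lambda>c. (c i, c j)) M = pair_pmf (pmf_of_set (grid d \<epsilon>)) (pmf_of_set (grid d \<epsilon>))"
      using p by (simp add: Pi_pmf_pair_proj)
    moreover have Bdp: "Bd p = (\<lambda>c. (c i, c j)) -` {z. dist2 d (fst z) (snd z) < sqrt (real d) / 5}"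
      unfolding Bd_def p(1) by (simp add: vimage_def)
    ultimately have "measure_pmf.prob M (Bd p) = measure_pmf.prob (pair_pmf (pmf_of_set (grid d \<epsilon>)) (pmf_of_set (grid d \<epsilon>)))
         {z. dist2 d (fst z) (snd z) < sqrt (real d) / 5}"
      by (simp only: measure_map_pmf[symmetric] Bdp)
    also have "\<dots> \<le> exp (- 4 * real n)" unfolding dn by (rule pair_bad_bound[OF e0 e1])
    finally show ?thesis .
  qed
  have "measure_pmf.prob M (UNIV - good) \<le> measure_pmf.prob M (\<Union>p\<in>P. Bd p)"
    using sub by (intro measure_pmf.finite_measure_mono) auto
  also have "\<dots> \<le> (\<Sum>p\<in>P. measure_pmf.prob M (Bd p))"
    by (intro measure_pmf.finite_measure_subadditive_finite finP) auto
  also have "\<dots> \<le> (\<Sum>p\<in>P. exp (- 4 * real n))" by (intro sum_mono Bd_le)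
  also have "\<dots> = real (card P) * exp (- 4 * real n)" by simp
  also have "\<dots> \<le> real (k * k) * exp (-4 * L)"
  proof (intro mult_mono)
    show "real (card P) \<le> real (k * k)" using cardP by linarith
    show "exp (- 4 * real n) \<le> exp (-4 * L)" using nL by simp
  qed auto
  also have "exp (-4 * L) = 1 / (real k)^4"
  proof -
    have "exp (-4 * L) = inverse (exp L ^ 4)"
      by (simp add: exp_minus[symmetric] exp_of_nat_mult[symmetric] mult.commute)
    also have "exp L = real k" unfolding L_def using k0 by simp
    finally show ?thesis by (simp add: inverse_eq_divide)
  qed
  also have "real (k * k) * (1 / (real k)^4) = 1 / (real k)^2"
  proof -
    have "(real k)^4 = (real k)^2 * (real k)^2" by (simp flip: power_add)
    thus ?thesis using k0 by (simp add: power2_eq_square)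
  qed
  finally have bad: "measure_pmf.prob M (UNIV - good) \<le> 1 / (real k)^2" .
  have "measure_pmf.prob M (UNIV - good) = 1 - measure_pmf.prob M good"
    using measure_pmf.prob_compl[of good M] by simp
  thus ?thesis using bad unfolding M_def good_def by linarith
qed

end
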